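(* Suppose $n\ge 2$, all buyers are additive, and the seller uses the max tie-breaking rule. Then for any selling-order function, the sequential first-price auction has a pure optimistic conservative subgame perfect equilibrium, and in every pure optimistic conservative subgame perfect equilibrium each item $j$ is allocated to a buyer $w\in\arg\max_i v_{i,j}$ at price $\max_{i\neq w}v_{i,j}$ (the second-highest valuation).
   Context: Setting: a set $M$ of $m$ items and a set $N$ of $n$ buyers; buyer $i$ is additive with values $v_{i,j}\ge 0$, $v_i(S)=\sum_{j\in S}v_{i,j}$, and quasi-linear utility. Items are sold one at a time, each by a sealed-bid first-price auction without reserve price: each buyer submits a nonnegative bid, a highest bidder wins and pays his bid. The seller fixes a selling-order function (the next item depends on the allocation of items sold so far) and a tie-breaking rule. Max tie-breaking rule: when a set $T$ of buyers tie with the highest bid on item $j$, the item goes to a buyer in $\arg\max_{i\in T}v_{i,j}$. Full information. Game-tree nodes are identified with the allocation of the items sold so far (which buyer won which item), and strategies depend on history only through this allocation. A pure subgame perfect equilibrium (SPE) is a profile of pure strategies that is a Nash equilibrium in every subgame. Optimistic conservative bidding: at a node $h$ where item $j$ is sold and buyer $i$ holds the set $X_i(h)$, let $U_i(h)$ be buyer $i$'s utility from the items sold from $h$ onward (increase in his value minus his payments for those items) when everybody follows the profile from $h$, and let $h^{j\to i}$ be the node reached when $j$ is allocated to $i$. A bid $b$ of buyer $i$ on $j$ at $h$ is optimistic conservative if $v_i(X_i(h)\cup\{j\})-v_i(X_i(h))-b+U_i(h^{j\to i})\ge U_i(h)$, i.e. winning with this bid would not leave $i$ worse off than the equilibrium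 path. A pure optimistic conservative SPE is a pure SPE in which every bid at every node (on or off the equilibrium path) is optimistic conservative. *)

theory Defs
  imports Complex_Main
begin

text \<open>Buyers are 0..<n, items are 0..<m. A game-tree node is the partial allocation
  of the items sold so far (item to buyer).\<close>

type_synonym node = "nat \<Rightarrow> nat option"

definition vset :: "(nat \<Rightarrow> nat \<Rightarrow> real) \<Rightarrow> nat \<Rightarrow> nat set \<Rightarrow> real" where
  "vset v i S = (\<Sum>j\<in>S. v i j)"

definition held :: "node \<Rightarrow> nat \<Rightarrow> nat set" where
  "held h i = {j. h j = Some i}"

inductive reach :: "nat \<Rightarrow> nat \<Rightarrow> (node \<Rightarrow> nat) \<Rightarrow> node \<Rightarrow> bool"
  for n m and \<sigma> :: "node \<Rightarrow> nat" where
  root: "reach n m \<sigma> Map.empty"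
| step: "reach n m \<sigma> h \<Longrightarrow> dom h \<noteq> {..<m} \<Longrightarrow> i < n \<Longrightarrow> reach n m \<sigma> (h(\<sigma> h \<mapsto> i))"

definition selling_order :: "nat \<Rightarrow> nat \<Rightarrow> (node \<Rightarrow> nat) \<Rightarrow> bool" where
  "selling_order n m \<sigma> \<longleftrightarrow>
     (\<forall>h. reach n m \<sigma> h \<and> dom h \<noteq> {..<m} \<longrightarrow> \<sigma> h \<in> {..<m} - dom h)"

text \<open>Max tie-breaking rule: tb h T is the buyer receiving the item sold at h when the
  buyers in T tie with the highest bid; it must be in T and maximise the value for that item.\<close>
definition max_tiebreak :: "nat \<Rightarrow> nat \<Rightarrow> (nat \<Rightarrow> nat \<Rightarrow> real) \<Rightarrow> (node \<Rightarrow> nat)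
    \<Rightarrow> (node \<Rightarrow> nat set \<Rightarrow> nat) \<Rightarrow> bool" where
  "max_tiebreak n m v \<sigma> tb \<longleftrightarrow>
     (\<forall>h T. reach n m \<sigma> h \<and> dom h \<noteq> {..<m} \<and> T \<noteq> {} \<and> T \<subseteq> {..<n} \<longrightarrow>
        tb h T \<in> T \<and> (\<forall>k\<in>T. v k (\<sigma> h) \<le> v (tb h T) (\<sigma> h)))"

text \<open>Profiles of pure strategies: b i h is buyer i's bid at node h (on item \<sigma> h).\<close>
definition winner :: "nat \<Rightarrow> (node \<Rightarrow> nat set \<Rightarrow> nat) \<Rightarrow> (nat \<Rightarrow> node \<Rightarrow> real) \<Rightarrow> node \<Rightarrow> nat" where
  "winner n tb b h = (let B = Max ((\<lambda>i. b i h) ` {..<n}) in tb h {i. i < n \<and> b i h = B})"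

fun util :: "nat \<Rightarrow> (nat \<Rightarrow> nat \<Rightarrow> real) \<Rightarrow> (node \<Rightarrow> nat) \<Rightarrow> (node \<Rightarrow> nat set \<Rightarrow> nat)
    \<Rightarrow> (nat \<Rightarrow> node \<Rightarrow> real) \<Rightarrow> nat \<Rightarrow> nat \<Rightarrow> node \<Rightarrow> real" where
  "util n v \<sigma> tb b i 0 h = 0"
| "util n v \<sigma> tb b i (Suc k) h =
     (let j = \<sigma> h; w = winner n tb b h
      in (if w = i then vset v i (held h i \<union> {j}) - vset v i (held h i) - b i h else 0)
         + util n v \<sigma> tb b i k (h(j \<mapsto> w)))"

definition U :: "nat \<Rightarrow> nat \<Rightarrow> (nat \<Rightarrow> nat \<Rightarrow> real) \<Rightarrow> (node \<Rightarrow> nat) \<Rightarrow> (node \<Rightarrow> nat set \<Rightarrow> nat)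
    \<Rightarrow> (nat \<Rightarrow> node \<Rightarrow> real) \<Rightarrow> nat \<Rightarrow> node \<Rightarrow> real" where
  "U n m v \<sigma> tb b i h = util n v \<sigma> tb b i (card ({..<m} - dom h)) h"

definition pure_SPE :: "nat \<Rightarrow> nat \<Rightarrow> (nat \<Rightarrow> nat \<Rightarrow> real) \<Rightarrow> (node \<Rightarrow> nat) \<Rightarrow> (node \<Rightarrow> nat set \<Rightarrow> nat)
    \<Rightarrow> (nat \<Rightarrow> node \<Rightarrow> real) \<Rightarrow> bool" where
  "pure_SPE n m v \<sigma> tb b \<longleftrightarrow>
     (\<forall>i h. i < n \<and> reach n m \<sigma> h \<longrightarrow> 0 \<le> b i h) \<and>
     (\<forall>i h b'. i < n \<and> reach n m \<sigma> h \<and> (\<forall>h'. reach n m \<sigma> h' \<longrightarrow> 0 \<le> b' h') \<longrightarrow>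
        U n m v \<sigma> tb (b(i := b')) i h \<le> U n m v \<sigma> tb b i h)"

definition opt_conservative :: "nat \<Rightarrow> nat \<Rightarrow> (nat \<Rightarrow> nat \<Rightarrow> real) \<Rightarrow> (node \<Rightarrow> nat) \<Rightarrow> (node \<Rightarrow> nat set \<Rightarrow> nat)
    \<Rightarrow> (nat \<Rightarrow> node \<Rightarrow> real) \<Rightarrow> bool" where
  "opt_conservative n m v \<sigma> tb b \<longleftrightarrow>
     (\<forall>i h. i < n \<and> reach n m \<sigma> h \<and> dom h \<noteq> {..<m} \<longrightarrow>
        vset v i (held h i \<union> {\<sigma> h}) - vset v i (held h i) - b i h
          + U n m v \<sigma> tb b i (h(\<sigma> h \<mapsto> i)) \<ge> U n m v \<sigma> tb b i h)"

inductive on_path :: "nat \<Rightarrow> nat \<Rightarrow> (node \<Rightarrow> nat) \<Rightarrow> (node \<Rightarrow> nat set \<Rightarrow> nat)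
    \<Rightarrow> (nat \<Rightarrow> node \<Rightarrow> real) \<Rightarrow> node \<Rightarrow> bool"
  for n m \<sigma> tb b where
  root: "on_path n m \<sigma> tb b Map.empty"
| step: "on_path n m \<sigma> tb b h \<Longrightarrow> dom h \<noteq> {..<m} \<Longrightarrow>
           on_path n m \<sigma> tb b (h(\<sigma> h \<mapsto> winner n tb b h))"

end

theory Submission
  imports Defs
begin

definition oth :: "nat \<Rightarrow> (nat \<Rightarrow> nat \<Rightarrow> real) \<Rightarrow> nat \<Rightarrow> nat \<Rightarrow> real" where
  "oth n v i j = Max ((\<lambda>k. v k j) ` ({..<n} - {i}))"

definition gg :: "nat \<Rightarrow> (nat \<Rightarrow> nat \<Rightarrow> real) \<Rightarrow> nat \<Rightarrow> nat \<Rightarrow> real" where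
  "gg n v i j = max 0 (v i j - oth n v i j)"

definition GG :: "nat \<Rightarrow> nat \<Rightarrow> (nat \<Rightarrow> nat \<Rightarrow> real) \<Rightarrow> nat \<Rightarrow> node \<Rightarrow> real" where
  "GG n m v i h = (\<Sum>j\<in>{..<m} - dom h. gg n v i j)"

lemma oth_ge: "k < n \<Longrightarrow> k \<noteq> i \<Longrightarrow> v k j \<le> oth n v i j"
  unfolding oth_def by (rule Max_ge) auto

lemma oth_in: assumes n2: "2 \<le> n" shows "\<exists>k<n. k \<noteq> i \<and> v k j = oth n v i j"
proof -
  have ne: "{..<n} - {i} \<noteq> {}"
  proof (cases "i = 0")
    case True then have "1 \<in> {..<n} - {i}" using n2 by auto
    then show ?thesis by blast
  next
    case False then have "0 \<in> {..<n} - {i}" using n2 by auto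
    then show ?thesis by blast
  qed
  have "oth n v i j \<in> (\<lambda>k. v k j) ` ({..<n} - {i})"
    unfolding oth_def by (rule Max_in) (use ne in auto)
  then show ?thesis by auto
qed

lemma oth_le: assumes "2 \<le> n" "\<And>k. k < n \<Longrightarrow> k \<noteq> i \<Longrightarrow> v k j \<le> c" shows "oth n v i j \<le> c"
proof -
  obtain k where "k<n" "k\<noteq>i" "v k j = oth n v i j" using oth_in[OF assms(1)] by blast
  then show ?thesis using assms by force
qed

definition bb :: "nat \<Rightarrow> nat \<Rightarrow> (nat \<Rightarrow> nat \<Rightarrow> real) \<Rightarrow> (node \<Rightarrow> nat) \<Rightarrow> nat \<Rightarrow> node \<Rightarrow> real" where
  "bb n m v \<sigma> i h = (if \<sigma> h < m then min (v i (\<sigma> h)) (oth n v i (\<sigma> h)) else 0)"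

context
  fixes n m :: nat and v :: "nat \<Rightarrow> nat \<Rightarrow> real"
    and \<sigma> :: "node \<Rightarrow> nat" and tb :: "node \<Rightarrow> nat set \<Rightarrow> nat"
  assumes n2: "n \<ge> 2"
    and vnn: "\<And>i j. i < n \<Longrightarrow> j < m \<Longrightarrow> 0 \<le> v i j"
    and so: "selling_order n m \<sigma>"
    and mt: "max_tiebreak n m v \<sigma> tb"
begin

lemma reach_dom: "reach n m \<sigma> h \<Longrightarrow> dom h \<subseteq> {..<m}"
proof (induction rule: reach.induct)
  case root then show ?case by simp
next
  case (step h i)
  then have "\<sigma> h \<in> {..<m} - dom h" using so unfolding selling_order_def by blast
  then show ?case using step.IH by (auto simp: dom_def subset_iff split: if_splits)
qed

lemma nonterm: assumes "reach n m \<sigma> h" "dom h \<noteq> {..<m}"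
  shows "\<sigma> h < m" "\<sigma> h \<notin> dom h"
  using assms so unfolding selling_order_def by auto

lemma vset_marg: assumes "reach n m \<sigma> h" "dom h \<noteq> {..<m}"
  shows "vset v i (held h i \<union> {\<sigma> h}) - vset v i (held h i) = v i (\<sigma> h)"
proof -
  have s: "held h i \<subseteq> dom h" unfolding held_def by auto
  have "held h i \<subseteq> {..<m}" using reach_dom[OF assms(1)] s by blast
  then have f: "finite (held h i)" using finite_subset by blast
  have "\<sigma> h \<notin> dom h" using nonterm(2)[OF assms] .
  then have "\<sigma> h \<notin> held h i" using s by blast
  then show ?thesis using f unfolding vset_def by simp
qed

lemma winner_props:
  assumes "reach n m \<sigma> h" "dom h \<noteq> {..<m}"
  shows "winner n tb b h < n"
    "b (winner n tb b h) h = Max ((\<lambda>i. b i h) ` {..<n})"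
    "\<And>i. i < n \<Longrightarrow> b i h \<le> Max ((\<lambda>i. b i h) ` {..<n})"
    "\<And>k. k < n \<Longrightarrow> b k h = Max ((\<lambda>i. b i h) ` {..<n}) \<Longrightarrow> v k (\<sigma> h) \<le> v (winner n tb b h) (\<sigma> h)"
proof -
  define B where "B = Max ((\<lambda>i. b i h) ` {..<n})"
  let ?T = "{i. i < n \<and> b i h = B}"
  have "0 \<in> {..<n}" using n2 by auto
  then have ne: "(\<lambda>i. b i h) ` {..<n} \<noteq> {}" by blast
  have "B \<in> (\<lambda>i. b i h) ` {..<n}" unfolding B_def by (rule Max_in) (use ne in auto)
  then have Tne: "?T \<noteq> {}" by auto
  have w: "winner n tb b h = tb h ?T" unfolding winner_def B_def Let_def by simp
  have Ts: "?T \<subseteq> {..<n}" by auto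
  have M: "\<forall>h T. reach n m \<sigma> h \<and> dom h \<noteq> {..<m} \<and> T \<noteq> {} \<and> T \<subseteq> {..<n} \<longrightarrow>
        tb h T \<in> T \<and> (\<forall>k\<in>T. v k (\<sigma> h) \<le> v (tb h T) (\<sigma> h))"
    using mt unfolding max_tiebreak_def .
  have P: "tb h ?T \<in> ?T \<and> (\<forall>k\<in>?T. v k (\<sigma> h) \<le> v (tb h ?T) (\<sigma> h))"
    by (rule M[rule_format, OF conjI[OF assms(1) conjI[OF assms(2) conjI[OF Tne Ts]]]])
  have P1: "tb h ?T < n" "b (tb h ?T) h = B" using conjunct1[OF P] by simp_all
  have P2: "\<And>k. k<n \<Longrightarrow> b k h = B \<Longrightarrow> v k (\<sigma> h) \<le> v (tb h ?T) (\<sigma> h)"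
    using conjunct2[OF P] by simp
  show "winner n tb b h < n" unfolding w by (rule P1(1))
  show "b (winner n tb b h) h = Max ((\<lambda>i. b i h) ` {..<n})" unfolding w B_def[symmetric] by (rule P1(2))
  show "\<And>i. i < n \<Longrightarrow> b i h \<le> Max ((\<lambda>i. b i h) ` {..<n})" by (rule Max_ge) auto
  show "\<And>k. k < n \<Longrightarrow> b k h = Max ((\<lambda>i. b i h) ` {..<n}) \<Longrightarrow> v k (\<sigma> h) \<le> v (winner n tb b h) (\<sigma> h)"
    unfolding w B_def[symmetric] by (rule P2)
qed

lemma card_child:
  assumes "reach n m \<sigma> h" "dom h \<noteq> {..<m}"
  shows "{..<m} - dom (h(\<sigma> h \<mapsto> x)) = ({..<m} - dom h) - {\<sigma> h}"
    "\<sigma> h \<in> {..<m} - dom h"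
    "card ({..<m} - dom h) = Suc (card ({..<m} - dom (h(\<sigma> h \<mapsto> x))))"
proof -
  show a: "{..<m} - dom (h(\<sigma> h \<mapsto> x)) = ({..<m} - dom h) - {\<sigma> h}" by auto
  show b: "\<sigma> h \<in> {..<m} - dom h" using nonterm[OF assms] by auto
  show "card ({..<m} - dom h) = Suc (card ({..<m} - dom (h(\<sigma> h \<mapsto> x))))"
  proof -
    have "card ({..<m} - dom h) > 0" using b by (auto simp: card_gt_0_iff)
    then show ?thesis unfolding a using b by simp
  qed
qed

lemma GG_child:
  assumes "reach n m \<sigma> h" "dom h \<noteq> {..<m}"
  shows "GG n m v i (h(\<sigma> h \<mapsto> x)) = GG n m v i h - gg n v i (\<sigma> h)"
  unfolding GG_def card_child(1)[OF assms] using card_child(2)[OF assms]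
  by (simp add: sum_diff1)

lemma U_step:
  assumes "reach n m \<sigma> h" "dom h \<noteq> {..<m}"
  shows "U n m v \<sigma> tb b i h = (if winner n tb b h = i then v i (\<sigma> h) - b i h else 0)
           + U n m v \<sigma> tb b i (h(\<sigma> h \<mapsto> winner n tb b h))"
  unfolding U_def card_child(3)[OF assms, of "winner n tb b h"]
  using vset_marg[OF assms] by (simp add: Let_def)

lemma util_agree:
  "(\<And>x h'. dom h \<subseteq> dom h' \<Longrightarrow> b1 x h' = b2 x h') \<Longrightarrow>
    util n v \<sigma> tb b1 i k h = util n v \<sigma> tb b2 i k h"
proof (induction k arbitrary: h)
  case 0 show ?case by simp
next
  case (Suc k)
  have e: "\<And>x. b1 x h = b2 x h" using Suc.prems by simp
  have wq: "winner n tb b1 h = winner n tb b2 h" unfolding winner_def by (simp add: e)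
  have "util n v \<sigma> tb b1 i k (h(\<sigma> h \<mapsto> winner n tb b2 h)) =
        util n v \<sigma> tb b2 i k (h(\<sigma> h \<mapsto> winner n tb b2 h))"
  proof (rule Suc.IH)
    fix x and h' :: node assume a: "dom (h(\<sigma> h \<mapsto> winner n tb b2 h)) \<subseteq> dom h'"
    have "dom h \<subseteq> dom h'" using a by simp
    then show "b1 x h' = b2 x h'" by (rule Suc.prems)
  qed
  then show ?case by (simp only: util.simps Let_def e wq)
qed

lemma dev:
  assumes spe: "pure_SPE n m v \<sigma> tb b" and h: "reach n m \<sigma> h" "dom h \<noteq> {..<m}"
    and i: "i < n" and y: "0 \<le> y"
  shows "(if winner n tb (b(i := (b i)(h := y))) h = i then v i (\<sigma> h) - y else 0)
           + U n m v \<sigma> tb b i (h(\<sigma> h \<mapsto> winner n tb (b(i := (b i)(h := y))) h))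
         \<le> U n m v \<sigma> tb b i h"
proof -
  define b1 where "b1 = b(i := (b i)(h := y))"
  have nn: "\<forall>h'. reach n m \<sigma> h' \<longrightarrow> 0 \<le> ((b i)(h := y)) h'"
    using spe i y unfolding pure_SPE_def by auto
  have le: "U n m v \<sigma> tb b1 i h \<le> U n m v \<sigma> tb b i h"
    using spe h i nn unfolding pure_SPE_def b1_def by blast
  have st: "U n m v \<sigma> tb b1 i h = (if winner n tb b1 h = i then v i (\<sigma> h) - b1 i h else 0)
           + U n m v \<sigma> tb b1 i (h(\<sigma> h \<mapsto> winner n tb b1 h))" by (rule U_step[OF h])
  have b1i: "b1 i h = y" by (simp add: b1_def)
  have "U n m v \<sigma> tb b1 i (h(\<sigma> h \<mapsto> winner n tb b1 h)) = U n m v \<sigma> tb b i (h(\<sigma> h \<mapsto> winner n tb b1 h))"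
    unfolding U_def
  proof (rule util_agree)
    fix x and h' :: node assume a: "dom (h(\<sigma> h \<mapsto> winner n tb b1 h)) \<subseteq> dom h'"
    then have "h' \<noteq> h" using nonterm(2)[OF h] by auto
    then show "b1 x h' = b x h'" by (simp add: b1_def)
  qed
  then have "U n m v \<sigma> tb b1 i h = (if winner n tb b1 h = i then v i (\<sigma> h) - y else 0)
           + U n m v \<sigma> tb b i (h(\<sigma> h \<mapsto> winner n tb b1 h))" using st b1i by simp
  then show ?thesis using le unfolding b1_def[symmetric] by linarith
qed

lemma winner_unique:
  assumes "reach n m \<sigma> h" "dom h \<noteq> {..<m}" "k < n"
    and "\<And>x. x < n \<Longrightarrow> x \<noteq> k \<Longrightarrow> b x h < b k h"
  shows "winner n tb b h = k"
proof (rule ccontr)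
  assume ne: "winner n tb b h \<noteq> k"
  have w: "winner n tb b h < n" by (rule winner_props(1)[OF assms(1,2)])
  have 1: "b (winner n tb b h) h < b k h" using assms(4)[OF w ne] .
  have 2: "b k h \<le> Max ((\<lambda>i. b i h) ` {..<n})" by (rule winner_props(3)[OF assms(1,2) assms(3)])
  have 3: "b (winner n tb b h) h = Max ((\<lambda>i. b i h) ` {..<n})" by (rule winner_props(2)[OF assms(1,2)])
  show False using 1 2 3 by linarith
qed

lemma on_path_reach: "on_path n m \<sigma> tb b h \<Longrightarrow> reach n m \<sigma> h"
proof (induction rule: on_path.induct)
  case root show ?case by (rule reach.root)
next
  case (step h)
  show ?case by (rule reach.step[OF step.IH step.hyps(2) winner_props(1)[OF step.IH step.hyps(2)]])
qed

lemma card0: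
  assumes "reach n m \<sigma> h" "card ({..<m} - dom h) = 0"
  shows "dom h = {..<m}"
proof -
  have "{..<m} - dom h = {}" using assms(2) by simp
  then show ?thesis using reach_dom[OF assms(1)] by blast
qed

lemma cardS:
  assumes "card ({..<m} - dom h) = Suc k"
  shows "dom h \<noteq> {..<m}"
  using assms by auto

lemma uniq:
  assumes spe: "pure_SPE n m v \<sigma> tb b" and oc: "opt_conservative n m v \<sigma> tb b"
  shows "reach n m \<sigma> h \<Longrightarrow> card ({..<m} - dom h) = k \<Longrightarrow>
     (\<forall>i<n. U n m v \<sigma> tb b i h = GG n m v i h) \<and>
     (dom h \<noteq> {..<m} \<longrightarrow> v (winner n tb b h) (\<sigma> h) = Max ((\<lambda>i. v i (\<sigma> h)) ` {..<n}) \<and>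
        b (winner n tb b h) h = oth n v (winner n tb b h) (\<sigma> h))"
proof (induction k arbitrary: h)
  case 0
  have d: "dom h = {..<m}" by (rule card0[OF 0(1) 0(2)])
  show ?case unfolding U_def GG_def using d by simp
next
  case (Suc k)
  have h: "reach n m \<sigma> h" by (rule Suc.prems(1))
  have nt: "dom h \<noteq> {..<m}" by (rule cardS[OF Suc.prems(2)])
  let ?j = "\<sigma> h"
  let ?w = "winner n tb b h"
  let ?B = "Max ((\<lambda>i. b i h) ` {..<n})"
  have ch: "\<And>x. x < n \<Longrightarrow> reach n m \<sigma> (h(?j \<mapsto> x)) \<and> card ({..<m} - dom (h(?j \<mapsto> x))) = k"
    using reach.step[OF h nt] card_child(3)[OF h nt] Suc.prems(2) by auto
  have Uch: "\<And>x i. x < n \<Longrightarrow> i < n \<Longrightarrow> U n m v \<sigma> tb b i (h(?j\<mapsto>x)) = GG n m v i h - gg n v i ?j"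
  proof -
    fix x i assume x: "x < n" and i: "i < n"
    have "U n m v \<sigma> tb b i (h(?j\<mapsto>x)) = GG n m v i (h(?j\<mapsto>x))"
      using Suc.IH[OF conjunct1[OF ch[OF x]] conjunct2[OF ch[OF x]]] i by blast
    then show "U n m v \<sigma> tb b i (h(?j\<mapsto>x)) = GG n m v i h - gg n v i ?j"
      using GG_child[OF h nt] by simp
  qed
  have wn: "?w < n" by (rule winner_props(1)[OF h nt])
  have bw: "b ?w h = ?B" by (rule winner_props(2)[OF h nt])
  have bB: "\<And>i. i<n \<Longrightarrow> b i h \<le> ?B" by (rule winner_props(3)[OF h nt])
  have tbv: "\<And>k. k<n \<Longrightarrow> b k h = ?B \<Longrightarrow> v k ?j \<le> v ?w ?j" by (rule winner_props(4)[OF h nt])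
  have Ust: "\<And>i. i<n \<Longrightarrow> U n m v \<sigma> tb b i h = (if ?w = i then v i ?j - b i h else 0) + (GG n m v i h - gg n v i ?j)"
    using U_step[OF h nt] Uch[OF wn] by simp
  have nn: "\<And>i. i < n \<Longrightarrow> 0 \<le> b i h" using spe h unfolding pure_SPE_def by blast
  have n0: "0 < n" using n2 by simp
  have B0: "0 \<le> ?B" using bB[OF n0] nn[OF n0] by linarith
  have dv: "\<And>i y. i<n \<Longrightarrow> 0 \<le> y \<Longrightarrow> (if winner n tb (b(i := (b i)(h:=y))) h = i then v i ?j - y else 0)
              \<le> (if ?w = i then v i ?j - b i h else 0)"
  proof -
    fix i and y :: real assume i: "i<n" and y: "0 \<le> y"
    have "winner n tb (b(i := (b i)(h := y))) h < n" by (rule winner_props(1)[OF h nt])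
    then have eqU: "U n m v \<sigma> tb b i (h(?j \<mapsto> winner n tb (b(i := (b i)(h := y))) h)) = GG n m v i h - gg n v i ?j"
      using Uch i by simp
    show "(if winner n tb (b(i := (b i)(h:=y))) h = i then v i ?j - y else 0)
              \<le> (if ?w = i then v i ?j - b i h else 0)"
      using dev[OF spe h nt i y] Ust[OF i] eqU by linarith
  qed
  have a: "\<And>k. k<n \<Longrightarrow> k \<noteq> ?w \<Longrightarrow> v k ?j \<le> ?B"
  proof (rule ccontr)
    fix k assume k: "k<n" "k \<noteq> ?w" "\<not> v k ?j \<le> ?B"
    define y where "y = (?B + v k ?j)/2"
    have y0: "0 \<le> y" "?B < y" "y < v k ?j" using k B0 y_def by auto
    have wk: "winner n tb (b(k := (b k)(h:=y))) h = k"
    proof (rule winner_unique[OF h nt k(1)])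
      fix x assume x: "x < n" "x \<noteq> k"
      have "b x h \<le> ?B" by (rule bB[OF x(1)])
      then show "(b(k := (b k)(h := y))) x h < (b(k := (b k)(h := y))) k h" using x(2) y0(2) by simp
    qed
    have "v k ?j - y \<le> 0" using dv[OF k(1) y0(1)] wk k(2) by auto
    then show False using y0 by simp
  qed
  have bc: "\<And>k. k<n \<Longrightarrow> k \<noteq> ?w \<Longrightarrow> b k h \<le> v k ?j"
  proof -
    fix k assume k: "k<n" "k \<noteq> ?w"
    have "vset v k (held h k \<union> {\<sigma> h}) - vset v k (held h k) - b k h + U n m v \<sigma> tb b k (h(\<sigma> h \<mapsto> k)) \<ge> U n m v \<sigma> tb b k h"
      using oc k(1) h nt unfolding opt_conservative_def by blast
    then show "b k h \<le> v k ?j" using vset_marg[OF h nt] Uch[OF k(1) k(1)] Ust[OF k(1)] k(2) by auto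
  qed
  have c: "\<exists>k<n. k \<noteq> ?w \<and> b k h = ?B"
  proof (rule ccontr)
    assume none: "\<not> (\<exists>k<n. k \<noteq> ?w \<and> b k h = ?B)"
    have lt: "\<And>k. k<n \<Longrightarrow> k \<noteq> ?w \<Longrightarrow> b k h < ?B"
    proof -
      fix k assume k: "k<n" "k \<noteq> ?w"
      have "b k h \<noteq> ?B" using none k by blast
      then show "b k h < ?B" using bB[OF k(1)] by linarith
    qed
    let ?s = "oth n (\<lambda>k _. b k h) ?w 0"
    obtain k0 where k0: "k0<n" "k0 \<noteq> ?w" "b k0 h = ?s" using oth_in[OF n2, of ?w "\<lambda>k _. b k h" 0] by auto
    have sge: "\<And>k. k<n \<Longrightarrow> k \<noteq> ?w \<Longrightarrow> b k h \<le> ?s" using oth_ge[of _ n ?w "\<lambda>k _. b k h" 0] by simp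
    have s0: "0 \<le> ?s" using nn[OF k0(1)] k0(3) by simp
    have sB: "?s < ?B" using lt[OF k0(1,2)] k0(3) by simp
    define y where "y = (?s + ?B)/2"
    have y: "0 \<le> y" "?s < y" "y < ?B" using s0 sB y_def by auto
    have wk: "winner n tb (b(?w := (b ?w)(h:=y))) h = ?w"
      by (rule winner_unique[OF h nt wn]) (use sge y in force)
    have "v ?w ?j - y \<le> v ?w ?j - b ?w h" using dv[OF wn y(1)] wk by simp
    then show False using y bw by simp
  qed
  obtain k where k: "k<n" "k \<noteq> ?w" "b k h = ?B" using c by blast
  have vk: "v k ?j = ?B" using bc[OF k(1,2)] a[OF k(1,2)] k(3) by simp
  have vw: "?B \<le> v ?w ?j" using tbv[OF k(1) k(3)] vk by simp
  have othw1: "oth n v ?w ?j \<le> ?B" by (rule oth_le[OF n2]) (use a in blast)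
  have othw2: "?B \<le> oth n v ?w ?j" using oth_ge[of k n ?w v ?j] k vk by simp
  have othw: "oth n v ?w ?j = ?B" using othw1 othw2 by simp
  have mx: "Max ((\<lambda>i. v i ?j) ` {..<n}) = v ?w ?j"
  proof (rule Max_eqI)
    show "finite ((\<lambda>i. v i ?j) ` {..<n})" by simp
    show "v ?w ?j \<in> (\<lambda>i. v i ?j) ` {..<n}" using wn by simp
    fix y assume "y \<in> (\<lambda>i. v i ?j) ` {..<n}"
    then obtain i where i: "i < n" "y = v i ?j" by auto
    show "y \<le> v ?w ?j"
    proof (cases "i = ?w")
      case True then show ?thesis using i by simp
    next
      case False then show ?thesis using i a[OF i(1) False] vw by simp
    qed
  qed
  have part2: "b ?w h = oth n v ?w ?j" using bw othw by simp
  have part1: "\<forall>i<n. U n m v \<sigma> tb b i h = GG n m v i h"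
  proof (intro allI impI)
    fix i assume i: "i<n"
    show "U n m v \<sigma> tb b i h = GG n m v i h"
    proof (cases "i = ?w")
      case True
      have "gg n v i ?j = v i ?j - ?B" unfolding gg_def using True othw vw by simp
      then show ?thesis using Ust[OF i] True bw by simp
    next
      case False
      have "v ?w ?j \<le> oth n v i ?j" using oth_ge[of ?w n i v ?j] wn False by simp
      then have "v i ?j \<le> oth n v i ?j" using a[OF i False] vw by simp
      then have "gg n v i ?j = 0" unfolding gg_def by simp
      then show ?thesis using Ust[OF i] False by simp
    qed
  qed
  show ?case using part1 part2 mx by simp
qed

lemma ub:
  assumes i: "i < n" and oeq: "\<And>k. k < n \<Longrightarrow> k \<noteq> i \<Longrightarrow> b'' k = bb n m v \<sigma> k"
  shows "reach n m \<sigma> h \<Longrightarrow> card ({..<m} - dom h) = k \<Longrightarrow> U n m v \<sigma> tb b'' i h \<le> GG n m v i h"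
proof (induction k arbitrary: h)
  case 0
  have d: "dom h = {..<m}" by (rule card0[OF 0(1) 0(2)])
  show ?case unfolding U_def GG_def using d by simp
next
  case (Suc k)
  have h: "reach n m \<sigma> h" by (rule Suc.prems(1))
  have nt: "dom h \<noteq> {..<m}" by (rule cardS[OF Suc.prems(2)])
  let ?j = "\<sigma> h"
  let ?w = "winner n tb b'' h"
  have jm: "?j < m" by (rule nonterm(1)[OF h nt])
  have wn: "?w < n" by (rule winner_props(1)[OF h nt])
  have ch: "reach n m \<sigma> (h(?j \<mapsto> ?w)) \<and> card ({..<m} - dom (h(?j \<mapsto> ?w))) = k"
    using reach.step[OF h nt wn] card_child(3)[OF h nt] Suc.prems(2) by auto
  have IH0: "U n m v \<sigma> tb b'' i (h(?j \<mapsto> ?w)) \<le> GG n m v i (h(?j \<mapsto> ?w))"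
    using Suc.IH[OF conjunct1[OF ch] conjunct2[OF ch]] by blast
  have IH: "U n m v \<sigma> tb b'' i (h(?j \<mapsto> ?w)) \<le> GG n m v i h - gg n v i ?j"
    using IH0 unfolding GG_child[OF h nt] .
  have gain: "(if ?w = i then v i ?j - b'' i h else 0) \<le> gg n v i ?j"
  proof (cases "?w = i")
    case False then show ?thesis by (simp add: gg_def)
  next
    case True
    obtain k' where k': "k'<n" "k' \<noteq> i" "v k' ?j = oth n v i ?j" using oth_in[OF n2] by blast
    have "b'' k' h \<le> Max ((\<lambda>i. b'' i h) ` {..<n})" by (rule winner_props(3)[OF h nt k'(1)])
    also have "\<dots> = b'' ?w h" by (rule winner_props(2)[OF h nt, symmetric])
    finally have le1: "b'' k' h \<le> b'' i h" using True by simp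
    have e1: "b'' k' h = min (v k' ?j) (oth n v k' ?j)" using oeq[OF k'(1,2)] jm by (simp add: bb_def)
    have "v i ?j \<le> oth n v k' ?j" using oth_ge[of i n k' v ?j] i k'(2) by simp
    then have "min (oth n v i ?j) (v i ?j) \<le> b'' i h" using le1 e1 k'(3) by linarith
    then have "v i ?j - b'' i h \<le> max 0 (v i ?j - oth n v i ?j)"
      by (auto simp: min_def max_def split: if_splits)
    then show ?thesis using True unfolding gg_def by simp
  qed
  show ?case using U_step[OF h nt, of b'' i] IH gain by linarith
qed

lemma bbU:
  shows "reach n m \<sigma> h \<Longrightarrow> card ({..<m} - dom h) = k \<Longrightarrow> \<forall>i<n. U n m v \<sigma> tb (bb n m v \<sigma>) i h = GG n m v i h"
proof (induction k arbitrary: h)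
  case 0
  have d: "dom h = {..<m}" by (rule card0[OF 0(1) 0(2)])
  show ?case unfolding U_def GG_def using d by simp
next
  case (Suc k)
  let ?P = "bb n m v \<sigma>"
  have h: "reach n m \<sigma> h" by (rule Suc.prems(1))
  have nt: "dom h \<noteq> {..<m}" by (rule cardS[OF Suc.prems(2)])
  let ?j = "\<sigma> h"
  let ?w = "winner n tb ?P h"
  let ?M = "Max ((\<lambda>i. v i ?j) ` {..<n})"
  have jm: "?j < m" by (rule nonterm(1)[OF h nt])
  have wn: "?w < n" by (rule winner_props(1)[OF h nt])
  have ch: "reach n m \<sigma> (h(?j \<mapsto> ?w)) \<and> card ({..<m} - dom (h(?j \<mapsto> ?w))) = k"
    using reach.step[OF h nt wn] card_child(3)[OF h nt] Suc.prems(2) by auto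
  have IH0: "\<And>i. i < n \<Longrightarrow> U n m v \<sigma> tb ?P i (h(?j \<mapsto> ?w)) = GG n m v i (h(?j \<mapsto> ?w))"
    using Suc.IH[OF conjunct1[OF ch] conjunct2[OF ch]] by blast
  have IH: "\<And>i. i < n \<Longrightarrow> U n m v \<sigma> tb ?P i (h(?j \<mapsto> ?w)) = GG n m v i h - gg n v i ?j"
    using IH0 unfolding GG_child[OF h nt] .
  have n0: "0 \<in> {..<n}" using n2 by simp
  have "?M \<in> (\<lambda>i. v i ?j) ` {..<n}" by (rule Max_in) (use n0 in auto)
  then obtain w0 where w0: "w0 < n" "v w0 ?j = ?M" by auto
  have Mge: "\<And>i. i < n \<Longrightarrow> v i ?j \<le> ?M" by (rule Max_ge) auto
  have o0: "oth n v w0 ?j \<le> v w0 ?j" by (rule oth_le[OF n2]) (use Mge w0 in simp)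
  have Pw0: "?P w0 h = oth n v w0 ?j" using o0 jm by (simp add: bb_def)
  have Pge: "\<And>i. i < n \<Longrightarrow> ?P i h \<le> ?P w0 h"
  proof -
    fix i assume i: "i < n"
    show "?P i h \<le> ?P w0 h"
    proof (cases "i = w0")
      case True then show ?thesis by simp
    next
      case False
      have "?P i h \<le> v i ?j" using jm by (simp add: bb_def)
      also have "\<dots> \<le> oth n v w0 ?j" by (rule oth_ge[OF i False])
      finally show ?thesis using Pw0 by simp
    qed
  qed
  have mx: "Max ((\<lambda>i. ?P i h) ` {..<n}) = ?P w0 h"
    by (rule Max_eqI) (use Pge w0 in auto)
  have vw: "v w0 ?j \<le> v ?w ?j" by (rule winner_props(4)[OF h nt w0(1)]) (use mx in simp)
  have vwM: "v ?w ?j = ?M" using vw w0 Mge[OF wn] by simp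
  show ?case
  proof (intro allI impI)
    fix i assume i: "i < n"
    have st: "U n m v \<sigma> tb ?P i h = (if ?w = i then v i ?j - ?P i h else 0) + (GG n m v i h - gg n v i ?j)"
      using U_step[OF h nt, of ?P i] IH[OF i] by simp
    show "U n m v \<sigma> tb ?P i h = GG n m v i h"
    proof (cases "?w = i")
      case True
      have "v i ?j - ?P i h = gg n v i ?j" using jm by (simp add: bb_def gg_def min_def max_def)
      then show ?thesis using st True by simp
    next
      case False
      have "v ?w ?j \<le> oth n v i ?j" using oth_ge[of ?w n i v ?j] wn False by simp
      then have "v i ?j \<le> oth n v i ?j" using Mge[OF i] vwM by simp
      then have "gg n v i ?j = 0" unfolding gg_def by simp
      then show ?thesis using st False by simp
    qed
  qed
qed

lemma bb_ok: "pure_SPE n m v \<sigma> tb (bb n m v \<sigma>) \<and> opt_conservative n m v \<sigma> tb (bb n m v \<sigma>)"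
proof -
  let ?P = "bb n m v \<sigma>"
  have UG: "\<And>i h. i < n \<Longrightarrow> reach n m \<sigma> h \<Longrightarrow> U n m v \<sigma> tb ?P i h = GG n m v i h"
    using bbU by blast
  have nn: "\<forall>i h. i < n \<and> reach n m \<sigma> h \<longrightarrow> 0 \<le> ?P i h"
  proof (intro allI impI)
    fix i h assume a: "i < n \<and> reach n m \<sigma> h"
    show "0 \<le> ?P i h"
    proof (cases "\<sigma> h < m")
      case True
      obtain k where k: "k < n" "k \<noteq> i" "v k (\<sigma> h) = oth n v i (\<sigma> h)" using oth_in[OF n2] by blast
      have "0 \<le> v k (\<sigma> h)" using vnn k(1) True by simp
      moreover have "0 \<le> v i (\<sigma> h)" using vnn a True by simp
      ultimately show ?thesis using True k(3) by (simp add: bb_def)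
    next
      case False then show ?thesis by (simp add: bb_def)
    qed
  qed
  have sp: "\<forall>i h b'. i < n \<and> reach n m \<sigma> h \<and> (\<forall>h'. reach n m \<sigma> h' \<longrightarrow> 0 \<le> b' h') \<longrightarrow>
        U n m v \<sigma> tb (?P(i := b')) i h \<le> U n m v \<sigma> tb ?P i h"
  proof (intro allI impI)
    fix i h and b' :: "node \<Rightarrow> real" assume a: "i < n \<and> reach n m \<sigma> h \<and> (\<forall>h'. reach n m \<sigma> h' \<longrightarrow> 0 \<le> b' h')"
    have "U n m v \<sigma> tb (?P(i := b')) i h \<le> GG n m v i h"
      by (rule ub[of i "?P(i := b')" h]) (use a in auto)
    then show "U n m v \<sigma> tb (?P(i := b')) i h \<le> U n m v \<sigma> tb ?P i h" using UG a by simp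
  qed
  have oc: "opt_conservative n m v \<sigma> tb ?P"
    unfolding opt_conservative_def
  proof (intro allI impI)
    fix i h assume a: "i < n \<and> reach n m \<sigma> h \<and> dom h \<noteq> {..<m}"
    then have h: "reach n m \<sigma> h" and nt: "dom h \<noteq> {..<m}" and i: "i < n" by auto
    have jm: "\<sigma> h < m" by (rule nonterm(1)[OF h nt])
    have r: "reach n m \<sigma> (h(\<sigma> h \<mapsto> i))" by (rule reach.step[OF h nt i])
    have "v i (\<sigma> h) - ?P i h = gg n v i (\<sigma> h)" using jm by (simp add: bb_def gg_def min_def max_def)
    then show "vset v i (held h i \<union> {\<sigma> h}) - vset v i (held h i) - ?P i h
          + U n m v \<sigma> tb ?P i (h(\<sigma> h \<mapsto> i)) \<ge> U n m v \<sigma> tb ?P i h"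
      using vset_marg[OF h nt] UG[OF i r] UG[OF i h] GG_child[OF h nt] by simp
  qed
  show ?thesis using nn sp oc unfolding pure_SPE_def by blast
qed

end

theorem mainTheorem5:
  fixes n m :: nat and v :: "nat \<Rightarrow> nat \<Rightarrow> real"
    and \<sigma> :: "node \<Rightarrow> nat" and tb :: "node \<Rightarrow> nat set \<Rightarrow> nat"
  assumes "n \<ge> 2"
    and "\<And>i j. i < n \<Longrightarrow> j < m \<Longrightarrow> 0 \<le> v i j"
    and "selling_order n m \<sigma>"
    and "max_tiebreak n m v \<sigma> tb"
  shows "(\<exists>b. pure_SPE n m v \<sigma> tb b \<and> opt_conservative n m v \<sigma> tb b) \<and>
         (\<forall>b. pure_SPE n m v \<sigma> tb b \<and> opt_conservative n m v \<sigma> tb b \<longrightarrow>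
            (\<forall>h. on_path n m \<sigma> tb b h \<and> dom h \<noteq> {..<m} \<longrightarrow>
               (let j = \<sigma> h; w = winner n tb b h
                in v w j = Max ((\<lambda>i. v i j) ` {..<n}) \<and>
                   b w h = Max ((\<lambda>i. v i j) ` ({..<n} - {w})))))"
proof
  show "\<exists>b. pure_SPE n m v \<sigma> tb b \<and> opt_conservative n m v \<sigma> tb b"
    using bb_ok[OF assms] by blast
next
  show "\<forall>b. pure_SPE n m v \<sigma> tb b \<and> opt_conservative n m v \<sigma> tb b \<longrightarrow>
            (\<forall>h. on_path n m \<sigma> tb b h \<and> dom h \<noteq> {..<m} \<longrightarrow>
               (let j = \<sigma> h; w = winner n tb b h
                in v w j = Max ((\<lambda>i. v i j) ` {..<n}) \<and>
                   b w h = Max ((\<lambda>i. v i j) ` ({..<n} - {w}))))"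
  proof (intro allI impI)
    fix b h assume A: "pure_SPE n m v \<sigma> tb b \<and> opt_conservative n m v \<sigma> tb b"
      and H: "on_path n m \<sigma> tb b h \<and> dom h \<noteq> {..<m}"
    have r: "reach n m \<sigma> h" using on_path_reach[OF assms] H by blast
    have "dom h \<noteq> {..<m} \<longrightarrow> v (winner n tb b h) (\<sigma> h) = Max ((\<lambda>i. v i (\<sigma> h)) ` {..<n}) \<and>
        b (winner n tb b h) h = oth n v (winner n tb b h) (\<sigma> h)"
      using uniq[OF assms conjunct1[OF A] conjunct2[OF A] r refl] by blast
    then show "let j = \<sigma> h; w = winner n tb b h
                in v w j = Max ((\<lambda>i. v i j) ` {..<n}) \<and>
                   b w h = Max ((\<lambda>i. v i j) ` ({..<n} - {w}))"
      using H by (simp add: Let_def oth_def)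
  qed
qed

end
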